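(* Let $A=(Q,q_0,\Sigma,\delta,\alpha)$ with $Q_d$ be an LDBA, $\mathsf{Ord}$ an ordering of its states w.r.t. $Q_d$, and $w\in\Sigma^\omega$. The color summary of the run DAG $G_w$ is even if and only if $G_w$ contains an accepting run (equivalently, iff $w\in\mathsf L(A)$).
   Context: A (transition-based) nondeterministic Büchi automaton is $A=(Q,q_0,\Sigma,\delta,\alpha)$ with finite $Q$, $q_0\in Q$, finite alphabet $\Sigma$, total $\delta\subseteq Q\times\Sigma\times Q$, and accepting transitions $\alpha\subseteq\delta$. A run on $w\in\Sigma^\omega$ is $\rho:\mathbb N\to Q$ with $\rho(0)=q_0$, $(\rho(i),w(i),\rho(i+1))\in\delta$; it is accepting if $(\rho(i),w(i),\rho(i+1))\in\alpha$ for infinitely many $i$; $\mathsf L(A)$ is the set of words with an accepting run. An LDBA additionally has $Q_d\subseteq Q$ with (1) $\alpha\subseteq Q_d\times\Sigma\times Q_d$; (2) each $q\in Q_d$ has exactly one $\sigma$-successor $\delta(q,\sigma)$ for each $\sigma$; (3) successors of states in $Q_d$ are in $Q_d$. Assume $q_0\notin Q_d$. Run DAG $G_w=(V,E)$: $V_0=\{(q_0,0)\}$, $V_i=\{(q,i)\mid\exists(q',i-1)\in V_{i-1}:(q',w(i-1),q)\in\delta\}$, $E=\{((q,i),(q',i+1))\in V_i\times V_{i+1}\mid (q,w(i),q')\in\delta\}$, $V^d_i=V_i\cap(Q_d\times\{i\})$. Runs are paths from $(q_0,0)$; a run $v_0v_1\dots$ with $v_i=(q_i,i)$ is accepting if $(q_i,w(i),q_{i+1})\in\alpha$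 for infinitely many $i$. An ordering w.r.t. $Q_d$ is $\mathsf{Ord}:Q\to\{1,\dots,|Q_d|,+\infty\}$ with value $+\infty$ exactly on $Q\setminus Q_d$ and injective on $Q_d$; $\mathsf{Ord}((q,i))=\mathsf{Ord}(q)$. For run prefixes of equal length $n+1$, $\rho(0..n)\sqsubseteq\rho'(0..n)$ iff their $\mathsf{Ord}$-sequences are equal or lexicographically smaller (first differing position $i$ has $\mathsf{Ord}(\rho(i))<\mathsf{Ord}(\rho'(i))$, with $+\infty$ above all integers). For distinct $v,v'\in V_i$, $v\sqsubset_i v'$ iff some run prefix ending in $v$ is $\sqsubseteq$-smaller than all run prefixes ending in $v'$; this is a total order on $V^d_i$. $\mathsf{Ind}_i(v)\in\{1,\dots,|Q_d|\}$ is the position of $v\in V^d_i$ in this order (the smallest has index 1). $\mathsf{Dec}(V^d_i)$ is the set of $v\in V^d_i$ whose (unique) successor $v'\in V^d_{i+1}$ satisfies $\mathsf{Ind}_{i+1}(v')<\mathsf{Ind}_i(v)$. $\mathsf{Acc}(V^d_i)$ is the set of $v=(q,i)\in V^d_i$ having an edge to some $(q',i+1)\in V^d_{i+1}$ with $(q,w(i),q')\in\alpha$. The color of the step from level $i$ to $i+1$ is: if $\mathsf{Dec}=\emptyset$ and $\mathsf{Acc}\neq\emptyset$: $2\min_{v\in\mathsf{Acc}(V^d_i)}\mathsf{Ind}_i(v)$; if $\mathsf{Dec}\ne\emptyset$ and $\mathsf{Acc}=\emptyset$: $2\min_{v\in\mathsf{Dec}(V^d_i)}\mathsf{Ind}_i(v)-1$;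 if both nonempty: the minimum of these two values; if both empty: $2|Q_d|+1$. The color summary of $G_w$ is the minimal color occurring infinitely often in this sequence of colors. *)

theory Defs
  imports Main "HOL-Library.Extended_Nat"
begin

record ('q, 'a) nba =
  states :: "'q set"
  init   :: 'q
  alph   :: "'a set"
  trans  :: "('q \<times> 'a \<times> 'q) set"
  acc    :: "('q \<times> 'a \<times> 'q) set"

definition is_nba :: "('q, 'a) nba \<Rightarrow> bool" where
  "is_nba A \<longleftrightarrow> finite (states A) \<and> init A \<in> states A \<and> finite (alph A)
     \<and> trans A \<subseteq> states A \<times> alph A \<times> states A
     \<and> (\<forall>q\<in>states A. \<forall>\<sigma>\<in>alph A. \<exists>q'. (q, \<sigma>, q') \<in> trans A)
     \<and> acc A \<subseteq> trans A"

definition is_ldba :: "('q, 'a) nba \<Rightarrow> 'q set \<Rightarrow> bool" where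
  "is_ldba A Qd \<longleftrightarrow> is_nba A \<and> Qd \<subseteq> states A
     \<and> acc A \<subseteq> Qd \<times> alph A \<times> Qd
     \<and> (\<forall>q\<in>Qd. \<forall>\<sigma>\<in>alph A. \<exists>!q'. (q, \<sigma>, q') \<in> trans A)
     \<and> (\<forall>q\<in>Qd. \<forall>\<sigma> q'. (q, \<sigma>, q') \<in> trans A \<longrightarrow> q' \<in> Qd)
     \<and> init A \<notin> Qd"

definition is_word :: "('q, 'a) nba \<Rightarrow> (nat \<Rightarrow> 'a) \<Rightarrow> bool" where
  "is_word A w \<longleftrightarrow> (\<forall>i. w i \<in> alph A)"

definition is_run :: "('q, 'a) nba \<Rightarrow> (nat \<Rightarrow> 'a) \<Rightarrow> (nat \<Rightarrow> 'q) \<Rightarrow> bool" where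
  "is_run A w r \<longleftrightarrow> r 0 = init A \<and> (\<forall>i. (r i, w i, r (Suc i)) \<in> trans A)"

definition accepting_run :: "('q, 'a) nba \<Rightarrow> (nat \<Rightarrow> 'a) \<Rightarrow> (nat \<Rightarrow> 'q) \<Rightarrow> bool" where
  "accepting_run A w r \<longleftrightarrow> is_run A w r \<and> (\<exists>\<^sub>\<infinity>i. (r i, w i, r (Suc i)) \<in> acc A)"

definition language :: "('q, 'a) nba \<Rightarrow> (nat \<Rightarrow> 'a) set" where
  "language A = {w. is_word A w \<and> (\<exists>r. accepting_run A w r)}"

definition is_ordering :: "('q, 'a) nba \<Rightarrow> 'q set \<Rightarrow> ('q \<Rightarrow> enat) \<Rightarrow> bool" where
  "is_ordering A Qd Ord \<longleftrightarrow>
     (\<forall>q\<in>states A. (q \<in> Qd \<longrightarrow> Ord q \<in> enat ` {1..card Qd}) \<and> (q \<notin> Qd \<longrightarrow> Ord q = \<infinity>))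
     \<and> inj_on Ord Qd"

text \<open>Levels of the run DAG G_w (vertex (q,i) is represented by q \<in> V i).\<close>
primrec dag_level :: "('q, 'a) nba \<Rightarrow> (nat \<Rightarrow> 'a) \<Rightarrow> nat \<Rightarrow> 'q set" where
  "dag_level A w 0 = {init A}"
| "dag_level A w (Suc i) = {q. \<exists>q'\<in>dag_level A w i. (q', w i, q) \<in> trans A}"

definition dag_level_d :: "('q, 'a) nba \<Rightarrow> 'q set \<Rightarrow> (nat \<Rightarrow> 'a) \<Rightarrow> nat \<Rightarrow> 'q set" where
  "dag_level_d A Qd w i = dag_level A w i \<inter> Qd"

text \<open>Run prefix of length n+1 (positions 0..n) in G_w; only values r 0 .. r n matter.\<close>
definition run_prefix :: "('q, 'a) nba \<Rightarrow> (nat \<Rightarrow> 'a) \<Rightarrow> nat \<Rightarrow> (nat \<Rightarrow> 'q) \<Rightarrow> bool" where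
  "run_prefix A w n r \<longleftrightarrow> r 0 = init A \<and> (\<forall>j<n. (r j, w j, r (Suc j)) \<in> trans A)"

definition prefix_le :: "('q \<Rightarrow> enat) \<Rightarrow> nat \<Rightarrow> (nat \<Rightarrow> 'q) \<Rightarrow> (nat \<Rightarrow> 'q) \<Rightarrow> bool" where
  "prefix_le Ord n r r' \<longleftrightarrow>
     (\<forall>j\<le>n. Ord (r j) = Ord (r' j))
     \<or> (\<exists>k\<le>n. (\<forall>j<k. Ord (r j) = Ord (r' j)) \<and> Ord (r k) < Ord (r' k))"

definition vertex_less :: "('q, 'a) nba \<Rightarrow> (nat \<Rightarrow> 'a) \<Rightarrow> ('q \<Rightarrow> enat) \<Rightarrow> nat \<Rightarrow> 'q \<Rightarrow> 'q \<Rightarrow> bool" where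
  "vertex_less A w Ord i q q' \<longleftrightarrow> q \<noteq> q' \<and>
     (\<exists>r. run_prefix A w i r \<and> r i = q \<and>
        (\<forall>r'. run_prefix A w i r' \<and> r' i = q' \<longrightarrow> prefix_le Ord i r r'))"

definition ind :: "('q, 'a) nba \<Rightarrow> 'q set \<Rightarrow> (nat \<Rightarrow> 'a) \<Rightarrow> ('q \<Rightarrow> enat) \<Rightarrow> nat \<Rightarrow> 'q \<Rightarrow> nat" where
  "ind A Qd w Ord i q = card {q' \<in> dag_level_d A Qd w i. vertex_less A w Ord i q' q} + 1"

definition dec_set :: "('q, 'a) nba \<Rightarrow> 'q set \<Rightarrow> (nat \<Rightarrow> 'a) \<Rightarrow> ('q \<Rightarrow> enat) \<Rightarrow> nat \<Rightarrow> 'q set" where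
  "dec_set A Qd w Ord i = {q \<in> dag_level_d A Qd w i. \<exists>q'. (q, w i, q') \<in> trans A
        \<and> q' \<in> dag_level_d A Qd w (Suc i) \<and> ind A Qd w Ord (Suc i) q' < ind A Qd w Ord i q}"

definition acc_set :: "('q, 'a) nba \<Rightarrow> 'q set \<Rightarrow> (nat \<Rightarrow> 'a) \<Rightarrow> nat \<Rightarrow> 'q set" where
  "acc_set A Qd w i = {q \<in> dag_level_d A Qd w i. \<exists>q'. q' \<in> dag_level_d A Qd w (Suc i)
        \<and> (q, w i, q') \<in> trans A \<and> (q, w i, q') \<in> acc A}"

definition color :: "('q, 'a) nba \<Rightarrow> 'q set \<Rightarrow> (nat \<Rightarrow> 'a) \<Rightarrow> ('q \<Rightarrow> enat) \<Rightarrow> nat \<Rightarrow> nat" where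
  "color A Qd w Ord i =
    (let D = dec_set A Qd w Ord i; F = acc_set A Qd w i;
         cA = 2 * Min (ind A Qd w Ord i ` F);
         cD = 2 * Min (ind A Qd w Ord i ` D) - 1
     in if D = {} \<and> F \<noteq> {} then cA
        else if D \<noteq> {} \<and> F = {} then cD
        else if D \<noteq> {} \<and> F \<noteq> {} then min cA cD
        else 2 * card Qd + 1)"

definition color_summary :: "('q, 'a) nba \<Rightarrow> 'q set \<Rightarrow> (nat \<Rightarrow> 'a) \<Rightarrow> ('q \<Rightarrow> enat) \<Rightarrow> nat" where
  "color_summary A Qd w Ord = (LEAST c. \<exists>\<^sub>\<infinity>i. color A Qd w Ord i = c)"

definition dag_has_accepting_run :: "('q, 'a) nba \<Rightarrow> (nat \<Rightarrow> 'a) \<Rightarrow> bool" where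
  "dag_has_accepting_run A w \<longleftrightarrow>
     (\<exists>r. r 0 = init A \<and> (\<forall>i. r i \<in> dag_level A w i \<and> (r i, w i, r (Suc i)) \<in> trans A)
        \<and> (\<exists>\<^sub>\<infinity>i. (r i, w i, r (Suc i)) \<in> acc A))"

end

theory Submission
  imports Defs "HOL-Library.Infinite_Set" "HOL-Library.FuncSet"
begin


lemma pigeon:
  fixes f :: "nat \<Rightarrow> nat"
  assumes "\<exists>\<^sub>\<infinity>i. f i \<le> B"
  shows "\<exists>c\<le>B. \<exists>\<^sub>\<infinity>i. f i = c"
proof -
  have "\<exists>\<^sub>\<infinity>i. \<exists>c\<in>{..B}. f i = c" using assms by (simp add: atMost_iff)
  then have "\<exists>c\<in>{..B}. \<exists>\<^sub>\<infinity>i. f i = c" by (simp only: INFM_finite_Bex_distrib[OF finite_atMost])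
  then show ?thesis by auto
qed

lemma prefix_le_refl: "prefix_le f n r r" by (simp add: prefix_le_def)

lemma prefix_le_total: "prefix_le f n r s \<or> prefix_le f n s r"
proof (cases "\<forall>j\<le>n. f (r j) = f (s j)")
  case True then show ?thesis by (simp add: prefix_le_def)
next
  case False
  then have "\<exists>j. j \<le> n \<and> f (r j) \<noteq> f (s j)" by auto
  then obtain k where k: "k \<le> n" "f (r k) \<noteq> f (s k)" and kl: "\<forall>j<k. \<not> (j \<le> n \<and> f (r j) \<noteq> f (s j))"
    unfolding exists_least_iff[of "\<lambda>j. j \<le> n \<and> f (r j) \<noteq> f (s j)"] by blast
  have eq: "\<forall>j<k. f (r j) = f (s j)" using kl k by auto
  show ?thesis
  proof (cases "f (r k) < f (s k)")
    case True then show ?thesis using k eq unfolding prefix_le_def by blast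
  next
    case False then have "f (s k) < f (r k)" using k by auto
    moreover have "\<forall>j<k. f (s j) = f (r j)" using eq by simp
    ultimately show ?thesis using k unfolding prefix_le_def by blast
  qed
qed

lemma prefix_le_trans:
  assumes "prefix_le f n r s" "prefix_le f n s t" shows "prefix_le f n r t"
proof -
  consider (a) "\<forall>j\<le>n. f (r j) = f (s j)" | (b) k1 where "k1 \<le> n" "\<forall>j<k1. f (r j) = f (s j)" "f (r k1) < f (s k1)"
    using assms(1) unfolding prefix_le_def by blast
  note c1 = this
  consider (c) "\<forall>j\<le>n. f (s j) = f (t j)" | (d) k2 where "k2 \<le> n" "\<forall>j<k2. f (s j) = f (t j)" "f (s k2) < f (t k2)"
    using assms(2) unfolding prefix_le_def by blast
  note c2 = this
  show ?thesis
  proof (cases rule: c1)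
    case a
    show ?thesis
    proof (cases rule: c2)
      case c then show ?thesis using a by (simp add: prefix_le_def)
    next
      case (d k2)
      have "\<forall>j<k2. f (r j) = f (t j)" using a d by auto
      moreover have "f (r k2) < f (t k2)" using a d by auto
      ultimately show ?thesis using d(1) unfolding prefix_le_def by blast
    qed
  next
    case (b k1)
    show ?thesis
    proof (cases rule: c2)
      case c
      have "\<forall>j<k1. f (r j) = f (t j)" using b c by auto
      moreover have "f (r k1) < f (t k1)" using b c by auto
      ultimately show ?thesis using b(1) unfolding prefix_le_def by blast
    next
      case (d k2)
      define k where "k = min k1 k2"
      have "\<forall>j<k. f (r j) = f (t j)" using b d unfolding k_def by auto
      moreover have "f (r k) < f (t k)"
      proof (cases k1 k2 rule: linorder_cases)
        case less then show ?thesis using b d unfolding k_def by auto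
      next
        case equal then show ?thesis using b d unfolding k_def by auto
      next
        case greater then show ?thesis using b d unfolding k_def by auto
      qed
      moreover have "k \<le> n" using b unfolding k_def by auto
      ultimately show ?thesis unfolding prefix_le_def by blast
    qed
  qed
qed

lemma prefix_le_antisym:
  assumes "prefix_le f n r s" "prefix_le f n s r" shows "\<forall>j\<le>n. f (r j) = f (s j)"
proof (rule ccontr)
  assume ne: "\<not> ?thesis"
  from assms(1) ne obtain k1 where b: "k1 \<le> n" "\<forall>j<k1. f (r j) = f (s j)" "f (r k1) < f (s k1)"
    unfolding prefix_le_def by blast
  from assms(2) ne obtain k2 where d: "k2 \<le> n" "\<forall>j<k2. f (s j) = f (r j)" "f (s k2) < f (r k2)"
    unfolding prefix_le_def by force
  show False
    by (cases k1 k2 rule: linorder_cases) (use b d in \<open>auto\<close>)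
qed

lemma prefix_le_Suc: "prefix_le f (Suc n) r s \<Longrightarrow> prefix_le f n r s"
proof -
  assume h: "prefix_le f (Suc n) r s"
  show ?thesis
  proof (cases "\<forall>j\<le>n. f (r j) = f (s j)")
    case True then show ?thesis by (simp add: prefix_le_def)
  next
    case False
    from h obtain k where k: "k \<le> Suc n" "\<forall>j<k. f (r j) = f (s j)" "f (r k) < f (s k)"
      using False unfolding prefix_le_def by auto
    have "k \<le> n"
    proof (rule ccontr)
      assume "\<not> k \<le> n" then have "k = Suc n" using k by auto
      then show False using k False by auto
    qed
    then show ?thesis using k unfolding prefix_le_def by blast
  qed
qed

lemma prefix_le_cong:
  assumes "\<forall>j\<le>n. r j = r' j" "\<forall>j\<le>n. s j = s' j"
  shows "prefix_le f n r s = prefix_le f n r' s'"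
proof -
  have a: "\<And>k. k \<le> n \<Longrightarrow> (\<forall>j<k. f (r j) = f (s j)) = (\<forall>j<k. f (r' j) = f (s' j))"
    using assms by auto
  have b: "\<And>k. k \<le> n \<Longrightarrow> (f (r k) < f (s k)) = (f (r' k) < f (s' k))" using assms by auto
  have c: "(\<forall>j\<le>n. f (r j) = f (s j)) = (\<forall>j\<le>n. f (r' j) = f (s' j))" using assms by auto
  show ?thesis unfolding prefix_le_def c using a b by blast
qed

lemma finite_min_ex:
  assumes "finite S" "S \<noteq> {}" "\<And>x y. le x y \<or> le y x" "\<And>x y z. le x y \<Longrightarrow> le y z \<Longrightarrow> le x z"
  shows "\<exists>m\<in>S. \<forall>x\<in>S. le m x"
  using assms(1,2)
proof (induction S rule: finite_ne_induct)
  case (singleton x) then show ?case using assms(3)[of x x] by auto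
next
  case (insert x F)
  then obtain m where m: "m \<in> F" "\<forall>y\<in>F. le m y" by blast
  show ?case
  proof (cases "le m x")
    case True then show ?thesis using m by auto
  next
    case False then have "le x m" using assms(3) by blast
    have "\<forall>y\<in>F. le x y" using m \<open>le x m\<close> assms(4) by blast
    then show ?thesis using assms(3)[of x x] by auto
  qed
qed



locale L =
  fixes A :: "('q,'a) nba" and Qd :: "'q set" and Ord :: "'q \<Rightarrow> enat" and w :: "nat \<Rightarrow> 'a"
  assumes ldba: "is_ldba A Qd" and ord: "is_ordering A Qd Ord" and word: "is_word A w"
begin

abbreviation V where "V i \<equiv> dag_level A w i"
abbreviation D where "D i \<equiv> dag_level_d A Qd w i"
abbreviation lt where "lt i \<equiv> vertex_less A w Ord i"
abbreviation ix where "ix i \<equiv> ind A Qd w Ord i"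
definition nxt where "nxt i p = (THE x. (p, w i, x) \<in> trans A)"

lemma fin_states: "finite (states A)" using ldba by (simp add: is_ldba_def is_nba_def)
lemma trans_sub: "(p,a,q) \<in> trans A \<Longrightarrow> p \<in> states A \<and> q \<in> states A"
  using ldba unfolding is_ldba_def is_nba_def by blast
lemma Qd_sub: "Qd \<subseteq> states A" using ldba by (simp add: is_ldba_def)
lemma fin_Qd: "finite Qd" using Qd_sub fin_states finite_subset by blast
lemma init_notin: "init A \<notin> Qd" using ldba by (simp add: is_ldba_def)
lemma init_states: "init A \<in> states A" using ldba by (simp add: is_ldba_def is_nba_def)
lemma acc_sub: "(p,a,q) \<in> acc A \<Longrightarrow> p \<in> Qd \<and> q \<in> Qd \<and> (p,a,q) \<in> trans A"
  using ldba unfolding is_ldba_def is_nba_def by blast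
lemma closed: "p \<in> Qd \<Longrightarrow> (p,a,q) \<in> trans A \<Longrightarrow> q \<in> Qd"
  using ldba unfolding is_ldba_def by blast
lemma w_alph: "w i \<in> alph A" using word by (simp add: is_word_def)

lemma ex1: "p \<in> Qd \<Longrightarrow> \<exists>!x. (p, w i, x) \<in> trans A"
  using ldba w_alph unfolding is_ldba_def by blast

lemma nxt_trans: "p \<in> Qd \<Longrightarrow> (p, w i, nxt i p) \<in> trans A"
  unfolding nxt_def using ex1 theI' by metis

lemma nxt_uniq: "p \<in> Qd \<Longrightarrow> (p, w i, x) \<in> trans A \<Longrightarrow> x = nxt i p"
  using ex1 nxt_trans by blast

lemma Ord_fin: "q \<in> Qd \<Longrightarrow> Ord q \<noteq> \<infinity>"
  using ord Qd_sub unfolding is_ordering_def by fastforce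
lemma Ord_inf: "q \<in> states A \<Longrightarrow> q \<notin> Qd \<Longrightarrow> Ord q = \<infinity>"
  using ord unfolding is_ordering_def by blast
lemma Ord_inj: "inj_on Ord Qd" using ord unfolding is_ordering_def by blast

lemma V_states: "q \<in> V i \<Longrightarrow> q \<in> states A"
  by (induction i arbitrary: q) (auto simp: init_states dest: trans_sub)

lemma D_iff: "q \<in> D i \<longleftrightarrow> q \<in> V i \<and> q \<in> Qd" by (simp add: dag_level_d_def)

lemma fin_D: "finite (D i)" using fin_Qd by (simp add: dag_level_d_def)

lemma nxt_D: assumes "p \<in> D i" shows "nxt i p \<in> D (Suc i)"
proof -
  have p: "p \<in> V i" "p \<in> Qd" using assms by (auto simp: D_iff)
  have t: "(p, w i, nxt i p) \<in> trans A" using nxt_trans p(2) .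
  show ?thesis using p t closed[OF p(2) t] by (auto simp: D_iff)
qed

lemma V_prefix: "q \<in> V i \<Longrightarrow> \<exists>r. run_prefix A w i r \<and> r i = q"
proof (induction i arbitrary: q)
  case 0 then show ?case by (auto simp: run_prefix_def intro!: exI[of _ "\<lambda>_. init A"])
next
  case (Suc i)
  then obtain q' where q': "q' \<in> V i" "(q', w i, q) \<in> trans A" by auto
  then obtain r where r: "run_prefix A w i r" "r i = q'" using Suc.IH by blast
  define r' where "r' = r(Suc i := q)"
  have "run_prefix A w (Suc i) r'"
    using r q' unfolding run_prefix_def r'_def by (auto simp: less_Suc_eq)
  then show ?case unfolding r'_def by auto
qed

lemma prefix_V: "run_prefix A w i r \<Longrightarrow> j \<le> i \<Longrightarrow> r j \<in> V j"
proof (induction j)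
  case 0 then show ?case by (simp add: run_prefix_def)
next
  case (Suc j)
  then have "(r j, w j, r (Suc j)) \<in> trans A" by (simp add: run_prefix_def)
  then show ?case using Suc by auto
qed

lemma prefix_Suc: "run_prefix A w (Suc i) r \<Longrightarrow> run_prefix A w i r"
  by (simp add: run_prefix_def)

lemma prefix_Qd: "run_prefix A w i r \<Longrightarrow> j \<le> i \<Longrightarrow> r j \<in> Qd \<Longrightarrow> r i \<in> Qd"
proof -
  assume a: "run_prefix A w i r" "j \<le> i" "r j \<in> Qd"
  have "\<forall>k. j + k \<le> i \<longrightarrow> r (j+k) \<in> Qd"
  proof
    fix k show "j + k \<le> i \<longrightarrow> r (j+k) \<in> Qd"
    proof (induction k)
      case 0 then show ?case using a by simp
    next
      case (Suc k)
      show ?case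
      proof
        assume "j + Suc k \<le> i"
        then have "(r (j+k), w (j+k), r (Suc (j+k))) \<in> trans A" using a(1) by (simp add: run_prefix_def)
        then show "r (j + Suc k) \<in> Qd" using Suc \<open>j + Suc k \<le> i\<close> closed by auto
      qed
    qed
  qed
  then show ?thesis using a(2) by (metis le_add_diff_inverse order_refl)
qed

lemma prefix_nonQd: "run_prefix A w i r \<Longrightarrow> r i \<notin> Qd \<Longrightarrow> j \<le> i \<Longrightarrow> Ord (r j) = \<infinity>"
  using prefix_Qd prefix_V V_states Ord_inf by blast

lemma prefix_le_key:
  "prefix_le f n r s = prefix_le id n (restrict (\<lambda>j. f (r j)) {..n}) (restrict (\<lambda>j. f (s j)) {..n})"
proof -
  have "prefix_le f n r s = prefix_le id n (\<lambda>j. f (r j)) (\<lambda>j. f (s j))" by (simp add: prefix_le_def)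
  also have "\<dots> = prefix_le id n (restrict (\<lambda>j. f (r j)) {..n}) (restrict (\<lambda>j. f (s j)) {..n})"
    by (rule prefix_le_cong) auto
  finally show ?thesis .
qed

lemma min_prefix:
  assumes "q \<in> V i"
  shows "\<exists>r. run_prefix A w i r \<and> r i = q \<and> (\<forall>r'. run_prefix A w i r' \<and> r' i = q \<longrightarrow> prefix_le Ord i r r')"
proof -
  define P where "P = {r. run_prefix A w i r \<and> r i = q}"
  define key where "key r = restrict (\<lambda>j. Ord (r j)) {..i}" for r :: "nat \<Rightarrow> 'q"
  have sub: "key ` P \<subseteq> PiE {..i} (\<lambda>_. Ord ` states A)"
  proof
    fix x assume "x \<in> key ` P"
    then obtain r where r: "r \<in> P" "x = key r" by blast
    have "\<forall>j\<in>{..i}. r j \<in> states A"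
      using r(1) prefix_V V_states unfolding P_def by blast
    then show "x \<in> PiE {..i} (\<lambda>_. Ord ` states A)"
      unfolding r(2) key_def restrict_PiE_iff by blast
  qed
  have fin: "finite (key ` P)"
    by (rule finite_subset[OF sub]) (simp add: finite_PiE fin_states)
  have ne: "key ` P \<noteq> {}" using V_prefix[OF assms] unfolding P_def by auto
  have "\<exists>m\<in>key ` P. \<forall>x\<in>key ` P. prefix_le id i m x"
    by (rule finite_min_ex[OF fin ne]) (rule prefix_le_total, erule (1) prefix_le_trans)
  then obtain m where m: "m \<in> key ` P" "\<forall>x\<in>key ` P. prefix_le id i m x" by blast
  then obtain r0 where r0: "r0 \<in> P" "m = key r0" by blast
  have "\<forall>r'\<in>P. prefix_le Ord i r0 r'"
  proof
    fix r' assume "r' \<in> P"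
    then have "prefix_le id i (key r0) (key r')" using m(2) r0(2) by simp
    then show "prefix_le Ord i r0 r'" unfolding key_def by (subst prefix_le_key)
  qed
  then show ?thesis using r0 unfolding P_def by auto
qed

lemma lt_ne: "lt i a b \<Longrightarrow> a \<noteq> b" by (simp add: vertex_less_def)

lemma lt_trans:
  assumes "q1 \<in> D i" "q2 \<in> D i" "lt i q1 q2" "lt i q2 q3"
  shows "lt i q1 q3"
proof -
  obtain r1 where r1: "run_prefix A w i r1" "r1 i = q1"
    "\<forall>r'. run_prefix A w i r' \<and> r' i = q2 \<longrightarrow> prefix_le Ord i r1 r'"
    using assms(3) unfolding vertex_less_def by blast
  obtain r2 where r2: "run_prefix A w i r2" "r2 i = q2"
    "\<forall>r'. run_prefix A w i r' \<and> r' i = q3 \<longrightarrow> prefix_le Ord i r2 r'"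
    using assms(4) unfolding vertex_less_def by blast
  have le12: "prefix_le Ord i r1 r2" using r1 r2 by blast
  have all: "\<forall>r'. run_prefix A w i r' \<and> r' i = q3 \<longrightarrow> prefix_le Ord i r1 r'"
    using le12 r2(3) prefix_le_trans by blast
  have "q1 \<noteq> q3"
  proof
    assume "q1 = q3"
    then have "prefix_le Ord i r2 r1" using r2 r1 by blast
    then have "Ord (r1 i) = Ord (r2 i)" using prefix_le_antisym[OF le12] by blast
    then have "q1 = q2" using Ord_inj assms(1,2) r1 r2 by (auto simp: D_iff inj_on_def)
    then show False using assms(3) lt_ne by blast
  qed
  then show ?thesis using r1 all unfolding vertex_less_def by blast
qed

lemma lt_total:
  assumes "q1 \<in> D i" "q2 \<in> D i" "q1 \<noteq> q2"
  shows "lt i q1 q2 \<or> lt i q2 q1"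
proof -
  obtain m1 where m1: "run_prefix A w i m1" "m1 i = q1"
    "\<forall>r'. run_prefix A w i r' \<and> r' i = q1 \<longrightarrow> prefix_le Ord i m1 r'"
    using min_prefix[of q1 i] assms(1) unfolding D_iff by blast
  obtain m2 where m2: "run_prefix A w i m2" "m2 i = q2"
    "\<forall>r'. run_prefix A w i r' \<and> r' i = q2 \<longrightarrow> prefix_le Ord i m2 r'"
    using min_prefix[of q2 i] assms(2) unfolding D_iff by blast
  show ?thesis
  proof (cases "prefix_le Ord i m1 m2")
    case True
    then have "\<forall>r'. run_prefix A w i r' \<and> r' i = q2 \<longrightarrow> prefix_le Ord i m1 r'"
      using m2 prefix_le_trans by blast
    then show ?thesis using m1 assms(3) unfolding vertex_less_def by blast
  next
    case False
    then have "prefix_le Ord i m2 m1" using prefix_le_total by blast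
    then have "\<forall>r'. run_prefix A w i r' \<and> r' i = q1 \<longrightarrow> prefix_le Ord i m2 r'"
      using m1 prefix_le_trans by blast
    then show ?thesis using m2 assms(3) unfolding vertex_less_def by blast
  qed
qed

definition LS where "LS i q = {q' \<in> D i. lt i q' q}"

lemma ix_eq: "ix i q = card (LS i q) + 1" unfolding ind_def LS_def by (rule refl)

lemma fin_LS: "finite (LS i q)" unfolding LS_def by (rule finite_subset[OF _ fin_D]) blast

lemma lt_ix: assumes "v \<in> D i" "q \<in> D i" "lt i v q" shows "ix i v < ix i q"
proof -
  have "LS i v \<subseteq> LS i q"
  proof
    fix x assume "x \<in> LS i v"
    then have x: "x \<in> D i" "lt i x v" unfolding LS_def by auto
    then show "x \<in> LS i q" using lt_trans[OF x(1) assms(1) x(2) assms(3)] unfolding LS_def by blast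
  qed
  moreover have "v \<in> LS i q" using assms unfolding LS_def by blast
  moreover have "v \<notin> LS i v" using lt_ne[of i v v] unfolding LS_def by blast
  ultimately have "LS i v \<subset> LS i q" by blast
  then have "card (LS i v) < card (LS i q)" by (rule psubset_card_mono[OF fin_LS])
  then show ?thesis unfolding ix_eq by simp
qed

lemma ix_lt: assumes "v \<in> D i" "q \<in> D i" "ix i v < ix i q" shows "lt i v q"
proof (rule ccontr)
  assume "\<not> lt i v q"
  moreover have "v \<noteq> q" using assms by auto
  ultimately have "lt i q v" using lt_total assms by blast
  then show False using lt_ix[OF assms(2,1)] assms(3) by simp
qed

lemma ix_inj: assumes "v \<in> D i" "q \<in> D i" "ix i v = ix i q" shows "v = q"
proof (rule ccontr)
  assume "v \<noteq> q"
  then have "lt i v q \<or> lt i q v" using lt_total assms by blast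
  then show False using lt_ix[OF assms(1,2)] lt_ix[OF assms(2,1)] assms(3) by auto
qed

lemma ix_ge1: "ix i q \<ge> 1" by (simp add: ix_eq)

lemma ix_le: assumes "q \<in> D i" shows "ix i q \<le> card Qd"
proof -
  have "LS i q \<subseteq> D i - {q}" using lt_ne unfolding LS_def by auto
  then have "card (LS i q) \<le> card (D i) - 1" using fin_D assms
    by (metis card_Diff_singleton card_mono finite_Diff)
  moreover have "card (D i) \<ge> 1" using assms fin_D by (metis card_0_eq empty_iff less_one not_le)
  moreover have "card (D i) \<le> card Qd" using fin_Qd by (simp add: card_mono dag_level_d_def)
  ultimately show ?thesis unfolding ix_eq by linarith
qed

end


context L begin

lemma P1:
  assumes q: "q \<in> D i" and x: "x \<in> D (Suc i)" and lt: "lt (Suc i) x (nxt i q)"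
  shows "\<exists>p\<in>D i. nxt i p = x \<and> lt i p q"
proof -
  obtain r where r: "run_prefix A w (Suc i) r" "r (Suc i) = x"
    "\<forall>r'. run_prefix A w (Suc i) r' \<and> r' (Suc i) = nxt i q \<longrightarrow> prefix_le Ord (Suc i) r r'"
    and xs: "x \<noteq> nxt i q"
    using lt unfolding vertex_less_def by blast
  define p where "p = r i"
  have ri: "run_prefix A w i r" using prefix_Suc r(1) .
  have pt: "(p, w i, x) \<in> trans A" using r(1,2) unfolding run_prefix_def p_def by auto
  have pV: "p \<in> V i" using prefix_V[OF ri, of i] p_def by simp
  have qQ: "q \<in> Qd" "q \<in> V i" using q by (auto simp: D_iff)
  have le: "\<forall>t. run_prefix A w i t \<and> t i = q \<longrightarrow> prefix_le Ord i r t"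
  proof (intro allI impI)
    fix t assume t: "run_prefix A w i t \<and> t i = q"
    define t' where "t' = t(Suc i := nxt i q)"
    have "run_prefix A w (Suc i) t'"
      using t nxt_trans[OF qQ(1), of i] unfolding run_prefix_def t'_def by (auto simp: less_Suc_eq)
    then have "prefix_le Ord (Suc i) r t'" using r(3) by (simp add: t'_def)
    then have "prefix_le Ord i r t'" by (rule prefix_le_Suc)
    moreover have "prefix_le Ord i r t' = prefix_le Ord i r t"
      by (rule prefix_le_cong) (auto simp: t'_def)
    ultimately show "prefix_le Ord i r t" by simp
  qed
  have pq: "p \<noteq> q" using nxt_uniq[OF qQ(1)] pt xs by blast
  have pQ: "p \<in> Qd"
  proof (rule ccontr)
    assume np: "p \<notin> Qd"
    obtain t where t: "run_prefix A w i t" "t i = q" using V_prefix qQ(2) by blast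
    have 1: "prefix_le Ord i r t" using le t by blast
    have 2: "\<forall>j\<le>i. Ord (r j) = \<infinity>" using prefix_nonQd[OF ri] np p_def by blast
    have 3: "Ord (t i) \<noteq> \<infinity>" using Ord_fin qQ t by simp
    show False
    proof (cases "\<forall>j\<le>i. Ord (r j) = Ord (t j)")
      case True then show False using 2 3 by auto
    next
      case False
      then obtain k where "k \<le> i" "Ord (r k) < Ord (t k)" using 1 unfolding prefix_le_def by blast
      then show False using 2 by auto
    qed
  qed
  have "lt i p q" unfolding vertex_less_def using pq ri p_def le by blast
  moreover have "nxt i p = x" using nxt_uniq[OF pQ pt] by simp
  moreover have "p \<in> D i" using pV pQ by (simp add: D_iff)
  ultimately show ?thesis by blast
qed

lemma LS_sub: assumes q: "q \<in> D i" shows "LS (Suc i) (nxt i q) \<subseteq> nxt i ` LS i q"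
proof
  fix x assume "x \<in> LS (Suc i) (nxt i q)"
  then have x: "x \<in> D (Suc i)" "lt (Suc i) x (nxt i q)" unfolding LS_def by auto
  obtain p where "p \<in> D i" "nxt i p = x" "lt i p q" using P1[OF q x] by blast
  then show "x \<in> nxt i ` LS i q" unfolding LS_def by blast
qed

lemma ix_mono: assumes q: "q \<in> D i" shows "ix (Suc i) (nxt i q) \<le> ix i q"
proof -
  have "card (LS (Suc i) (nxt i q)) \<le> card (nxt i ` LS i q)"
    by (rule card_mono[OF finite_imageI[OF fin_LS] LS_sub[OF q]])
  also have "\<dots> \<le> card (LS i q)" by (rule card_image_le[OF fin_LS])
  finally show ?thesis unfolding ix_eq by simp
qed

lemma stable:
  assumes q: "q \<in> D i" and eq: "ix (Suc i) (nxt i q) = ix i q" and v: "v \<in> D i" and vq: "lt i v q"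
  shows "ix i v \<le> ix (Suc i) (nxt i v)"
proof -
  let ?L = "LS i q" and ?L' = "LS (Suc i) (nxt i q)"
  have c1: "card ?L' \<le> card (nxt i ` ?L)"
    by (rule card_mono[OF finite_imageI[OF fin_LS] LS_sub[OF q]])
  have c2: "card (nxt i ` ?L) \<le> card ?L" by (rule card_image_le[OF fin_LS])
  have c3: "card ?L' = card ?L" using eq unfolding ix_eq by simp
  have inj: "inj_on (nxt i) ?L"
    using c1 c2 c3 inj_on_iff_eq_card[OF fin_LS, of "nxt i" i q] by linarith
  have vL: "v \<in> ?L" using v vq unfolding LS_def by blast
  have img: "nxt i ` LS i v \<subseteq> LS (Suc i) (nxt i v)"
  proof
    fix y assume "y \<in> nxt i ` LS i v"
    then obtain u where u: "u \<in> D i" "lt i u v" "y = nxt i u" unfolding LS_def by blast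
    have uL: "u \<in> ?L" using lt_trans[OF u(1) v u(2) vq] u(1) unfolding LS_def by blast
    have ne: "nxt i u \<noteq> nxt i v"
    proof
      assume "nxt i u = nxt i v"
      then have "u = v" using inj uL vL unfolding inj_on_def by blast
      then show False using u(2) lt_ne by blast
    qed
    have nu: "nxt i u \<in> D (Suc i)" and nv: "nxt i v \<in> D (Suc i)" using nxt_D u(1) v by auto
    have "lt (Suc i) (nxt i u) (nxt i v)"
    proof (rule ccontr)
      assume "\<not> lt (Suc i) (nxt i u) (nxt i v)"
      then have "lt (Suc i) (nxt i v) (nxt i u)" using lt_total[OF nu nv ne] by blast
      then obtain p where p: "p \<in> D i" "nxt i p = nxt i v" "lt i p u" using P1[OF u(1) nv] by blast
      have pv: "lt i p v" using lt_trans[OF p(1) u(1) p(3) u(2)] .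
      have "p \<in> ?L" using lt_trans[OF p(1) v pv vq] p(1) unfolding LS_def by blast
      then have "p = v" using inj vL p(2) unfolding inj_on_def by blast
      then show False using pv lt_ne by blast
    qed
    then show "y \<in> LS (Suc i) (nxt i v)" using u(3) nu unfolding LS_def by blast
  qed
  have sub: "LS i v \<subseteq> ?L"
  proof
    fix u assume "u \<in> LS i v"
    then have u: "u \<in> D i" "lt i u v" unfolding LS_def by auto
    show "u \<in> ?L" using lt_trans[OF u(1) v u(2) vq] u(1) unfolding LS_def by blast
  qed
  have "card (LS i v) = card (nxt i ` LS i v)"
    using card_image[OF inj_on_subset[OF inj sub]] by simp
  also have "\<dots> \<le> card (LS (Suc i) (nxt i v))" by (rule card_mono[OF fin_LS img])
  finally show ?thesis unfolding ix_eq by simp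
qed

end

context L begin

abbreviation col where "col i \<equiv> color A Qd w Ord i"
abbreviation DS where "DS i \<equiv> dec_set A Qd w Ord i"
abbreviation FS where "FS i \<equiv> acc_set A Qd w i"

lemma DS_D: "DS i \<subseteq> D i" by (auto simp: dec_set_def)
lemma FS_D: "FS i \<subseteq> D i" by (auto simp: acc_set_def)

lemma Min_facts:
  assumes "S \<subseteq> D i" "S \<noteq> {}"
  shows "1 \<le> Min (ix i ` S)" "Min (ix i ` S) \<le> card Qd" "\<forall>v\<in>S. Min (ix i ` S) \<le> ix i v"
    "\<exists>v\<in>S. ix i v = Min (ix i ` S)"
proof -
  have fin: "finite (ix i ` S)" using finite_subset[OF assms(1) fin_D] by blast
  have ne: "ix i ` S \<noteq> {}" using assms(2) by blast
  have "Min (ix i ` S) \<in> ix i ` S" using Min_in[OF fin ne] .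
  then obtain v where v: "v \<in> S" "ix i v = Min (ix i ` S)" by auto
  then show "\<exists>v\<in>S. ix i v = Min (ix i ` S)" by blast
  show "1 \<le> Min (ix i ` S)" using v ix_ge1 by metis
  show "Min (ix i ` S) \<le> card Qd" using v ix_le assms(1) by (metis subsetD)
  show "\<forall>v\<in>S. Min (ix i ` S) \<le> ix i v" using Min_le[OF fin] by blast
qed

lemma col_unf: "col i =
    (if DS i = {} \<and> FS i \<noteq> {} then 2 * Min (ix i ` FS i)
     else if DS i \<noteq> {} \<and> FS i = {} then 2 * Min (ix i ` DS i) - 1
     else if DS i \<noteq> {} \<and> FS i \<noteq> {} then min (2 * Min (ix i ` FS i)) (2 * Min (ix i ` DS i) - 1)
     else 2 * card Qd + 1)"
  unfolding color_def Let_def by simp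

lemma col_bounds: "1 \<le> col i \<and> col i \<le> 2 * card Qd + 1"
proof (cases "DS i = {}")
  case True
  show ?thesis
  proof (cases "FS i = {}")
    case True with \<open>DS i = {}\<close> show ?thesis unfolding col_unf by simp
  next
    case False
    have "1 \<le> Min (ix i ` FS i)" "Min (ix i ` FS i) \<le> card Qd" using Min_facts[OF FS_D False] by auto
    with False \<open>DS i = {}\<close> show ?thesis unfolding col_unf by simp
  qed
next
  case False
  have d: "1 \<le> Min (ix i ` DS i)" "Min (ix i ` DS i) \<le> card Qd" using Min_facts[OF DS_D False] by auto
  show ?thesis
  proof (cases "FS i = {}")
    case True
    with False have "col i = 2 * Min (ix i ` DS i) - 1" unfolding col_unf by simp
    then show ?thesis using d by linarith
  next
    case F: False
    have "1 \<le> Min (ix i ` FS i)" "Min (ix i ` FS i) \<le> card Qd" using Min_facts[OF FS_D F] by auto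
    with F False d show ?thesis unfolding col_unf by (simp add: min_def; arith)
  qed
qed

lemma col_le_D: assumes "DS i \<noteq> {}" shows "col i \<le> 2 * Min (ix i ` DS i) - 1"
  using assms unfolding col_unf by (cases "FS i = {}") (simp_all add: min_def)

lemma col_le_F: assumes "FS i \<noteq> {}" shows "col i \<le> 2 * Min (ix i ` FS i)"
  using assms unfolding col_unf by (cases "DS i = {}") (simp_all add: min_def)

lemma C2:
  assumes "\<forall>v\<in>DS i. ix i v > k" "odd (col i)" "k \<le> card Qd"
  shows "2 * k + 1 \<le> col i"
proof (cases "DS i = {}")
  case True
  show ?thesis
  proof (cases "FS i = {}")
    case True with \<open>DS i = {}\<close> assms(3) show ?thesis unfolding col_unf by simp
  next
    case False
    with \<open>DS i = {}\<close> have "col i = 2 * Min (ix i ` FS i)" unfolding col_unf by simp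
    then show ?thesis using assms(2) by simp
  qed
next
  case False
  have d: "k < Min (ix i ` DS i)" using Min_facts(4)[OF DS_D False] assms(1) by metis
  show ?thesis
  proof (cases "FS i = {}")
    case True with False d show ?thesis unfolding col_unf by simp
  next
    case F: False
    have e: "col i = min (2 * Min (ix i ` FS i)) (2 * Min (ix i ` DS i) - 1)"
      using F False unfolding col_unf by simp
    have "col i = 2 * Min (ix i ` DS i) - 1"
    proof (rule ccontr)
      assume "col i \<noteq> 2 * Min (ix i ` DS i) - 1"
      then have "col i = 2 * Min (ix i ` FS i)" using e by (simp add: min_def split: if_splits)
      then show False using assms(2) by simp
    qed
    then show ?thesis using d by simp
  qed
qed

lemma C3: assumes "u \<in> FS i" "ix i u = k" shows "col i \<le> 2 * k"
proof -
  have "Min (ix i ` FS i) \<le> k" using Min_facts(3)[OF FS_D, of i] assms by blast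
  then show ?thesis using col_le_F[of i] assms(1) by force
qed

lemma C4a: assumes "2 * k \<le> col i" "v \<in> DS i" shows "k < ix i v"
proof -
  have ne: "DS i \<noteq> {}" using assms(2) by blast
  have m: "1 \<le> Min (ix i ` DS i)" "Min (ix i ` DS i) \<le> ix i v"
    using Min_facts[OF DS_D ne] assms(2) by auto
  have "col i \<le> 2 * Min (ix i ` DS i) - 1" using col_le_D[OF ne] .
  then show ?thesis using assms(1) m by linarith
qed

lemma C4b: assumes "col i = 2 * k" shows "\<exists>u\<in>FS i. ix i u = k"
proof -
  have "FS i \<noteq> {}"
  proof
    assume "FS i = {}"
    have "odd (col i)"
    proof (cases "DS i = {}")
      case True then show ?thesis using \<open>FS i = {}\<close> unfolding col_unf by simp
    next
      case False
      have "1 \<le> Min (ix i ` DS i)" using Min_facts[OF DS_D False] by blast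
      then show ?thesis using False \<open>FS i = {}\<close> unfolding col_unf by simp
    qed
    then show False using assms by simp
  qed
  moreover have "col i = 2 * Min (ix i ` FS i)"
  proof (cases "DS i = {}")
    case True then show ?thesis using \<open>FS i \<noteq> {}\<close> unfolding col_unf by simp
  next
    case False
    have e: "col i = min (2 * Min (ix i ` FS i)) (2 * Min (ix i ` DS i) - 1)"
      using \<open>FS i \<noteq> {}\<close> False unfolding col_unf by simp
    have "1 \<le> Min (ix i ` DS i)" using Min_facts[OF DS_D False] by blast
    then have o: "odd (2 * Min (ix i ` DS i) - 1)" by simp
    have "col i = 2 * Min (ix i ` FS i) \<or> col i = 2 * Min (ix i ` DS i) - 1" using e by (simp add: min_def)
    then show ?thesis
    proof
      assume "col i = 2 * Min (ix i ` DS i) - 1"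
      then have "odd (col i)" using o by simp
      then show ?thesis using assms by simp
    qed
  qed
  ultimately show ?thesis using Min_facts(4)[OF FS_D] assms by force
qed

end

context L begin

abbreviation cs where "cs \<equiv> color_summary A Qd w Ord"

lemma cs_least: "\<exists>\<^sub>\<infinity>i. col i = c \<Longrightarrow> cs \<le> c"
  unfolding color_summary_def by (rule Least_le)

lemma cs_le: assumes "\<exists>\<^sub>\<infinity>i. col i \<le> B" shows "cs \<le> B"
proof -
  obtain c where "c \<le> B" "\<exists>\<^sub>\<infinity>i. col i = c" using pigeon[OF assms] by blast
  then show ?thesis using cs_least by fastforce
qed

lemma cs_inf: "\<exists>\<^sub>\<infinity>i. col i = cs"
proof -
  have "\<exists>\<^sub>\<infinity>i. col i \<le> 2 * card Qd + 1" using col_bounds by (simp add: INFM_nat)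
  then obtain c where "\<exists>\<^sub>\<infinity>i. col i = c" using pigeon by blast
  then show ?thesis unfolding color_summary_def by (rule LeastI)
qed

lemma dir1:
  assumes ev: "even cs"
  shows "dag_has_accepting_run A w"
proof -
  define k where "k = cs div 2"
  have cs2: "cs = 2 * k" using ev unfolding k_def by simp
  obtain i where "col i = cs" using cs_inf by (auto simp: INFM_nat)
  then have "cs \<ge> 1" using col_bounds[of i] by simp
  then have k1: "k \<ge> 1" using cs2 by simp
  have "\<not> (\<exists>\<^sub>\<infinity>i. col i \<le> 2 * k - 1)"
  proof
    assume "\<exists>\<^sub>\<infinity>i. col i \<le> 2 * k - 1"
    then have "cs \<le> 2 * k - 1" by (rule cs_le)
    then show False using cs2 k1 by simp
  qed
  then obtain N where N0: "\<forall>i>N. 2 * k - 1 < col i" unfolding INFM_nat by (auto simp: not_le)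
  have N: "\<forall>i>N. 2 * k \<le> col i"
  proof (intro allI impI)
    fix i assume "i > N" then have "2 * k - 1 < col i" using N0 by blast
    then show "2 * k \<le> col i" using k1 by linarith
  qed
  obtain M where M: "M > N" "col M = 2 * k" using cs_inf cs2 unfolding INFM_nat by metis
  obtain u where u: "u \<in> FS M" "ix M u = k" using C4b[OF M(2)] by blast
  have uD: "u \<in> D M" using u FS_D by blast
  define pth where "pth = rec_nat u (\<lambda>n p. nxt (M+n) p)"
  have p0: "pth 0 = u" and pS: "\<And>n. pth (Suc n) = nxt (M+n) (pth n)" unfolding pth_def by simp_all
  have inv: "pth n \<in> D (M+n) \<and> ix (M+n) (pth n) = k" for n
  proof (induction n)
    case 0 then show ?case using uD u p0 by simp
  next
    case (Suc n)
    then have pD: "pth n \<in> D (M+n)" and pk: "ix (M+n) (pth n) = k" by auto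
    have nD: "nxt (M+n) (pth n) \<in> D (Suc (M+n))" using nxt_D[OF pD] .
    have le: "ix (Suc (M+n)) (nxt (M+n) (pth n)) \<le> k" using ix_mono[OF pD] pk by simp
    have ge: "\<not> ix (Suc (M+n)) (nxt (M+n) (pth n)) < k"
    proof
      assume lt: "ix (Suc (M+n)) (nxt (M+n) (pth n)) < k"
      have "pth n \<in> DS (M+n)"
        unfolding dec_set_def using pD nD lt pk nxt_trans[of "pth n" "M+n"] by (auto simp: D_iff)
      moreover have "2 * k \<le> col (M+n)" using N M(1) by simp
      ultimately have "k < ix (M+n) (pth n)" using C4a by blast
      then show False using pk by simp
    qed
    show ?case using nD le ge pS[of n] by simp
  qed
  have accp: "\<forall>m. \<exists>n>m. (pth n, w (M+n), pth (Suc n)) \<in> acc A"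
  proof
    fix m
    obtain i where i: "i > M + m" "col i = 2 * k" using cs_inf cs2 unfolding INFM_nat by metis
    obtain u' where u': "u' \<in> FS i" "ix i u' = k" using C4b[OF i(2)] by blast
    define n where "n = i - M"
    have iM: "i = M + n" using i(1) unfolding n_def by simp
    have "u' = pth n" using ix_inj[of u' i "pth n"] u' FS_D inv[of n] iM by auto
    moreover obtain q' where q': "q' \<in> D (Suc i)" "(u', w i, q') \<in> trans A" "(u', w i, q') \<in> acc A"
      using u'(1) unfolding acc_set_def by blast
    moreover have "u' \<in> Qd" using subsetD[OF FS_D u'(1)] by (simp add: D_iff)
    ultimately have "q' = pth (Suc n)" using nxt_uniq pS[of n] iM by metis
    then have "(pth n, w (M+n), pth (Suc n)) \<in> acc A" using q' \<open>u' = pth n\<close> iM by simp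
    moreover have "n > m" using i(1) unfolding n_def by simp
    ultimately show "\<exists>n>m. (pth n, w (M+n), pth (Suc n)) \<in> acc A" by blast
  qed
  obtain r0 where r0: "run_prefix A w M r0" "r0 M = u" using V_prefix uD by (auto simp: D_iff)
  define r where "r j = (if j \<le> M then r0 j else pth (j - M))" for j
  have rge: "r j = pth (j - M)" if "j \<ge> M" for j
    using that r0(2) p0 unfolding r_def by (cases "j = M") auto
  have "r 0 = init A" using r0 unfolding r_def run_prefix_def by simp
  moreover have "\<forall>i. r i \<in> V i \<and> (r i, w i, r (Suc i)) \<in> trans A"
  proof
    fix i show "r i \<in> V i \<and> (r i, w i, r (Suc i)) \<in> trans A"
    proof (cases "i < M")
      case True
      then show ?thesis using prefix_V[OF r0(1), of i] r0(1) unfolding r_def run_prefix_def by auto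
    next
      case False
      then have a: "r i = pth (i - M)" "r (Suc i) = pth (Suc (i - M))" using rge by (auto simp: Suc_diff_le)
      have b: "pth (i - M) \<in> D i" using inv[of "i - M"] False by simp
      have "(pth (i - M), w i, pth (Suc (i - M))) \<in> trans A"
        using nxt_trans[of "pth (i - M)" i] b pS[of "i - M"] False by (auto simp: D_iff)
      then show ?thesis using a b by (simp add: D_iff)
    qed
  qed
  moreover have "\<exists>\<^sub>\<infinity>i. (r i, w i, r (Suc i)) \<in> acc A"
    unfolding INFM_nat
  proof
    fix m
    obtain n where n: "n > m" "(pth n, w (M+n), pth (Suc n)) \<in> acc A" using accp by blast
    have "r (M+n) = pth n" "r (Suc (M+n)) = pth (Suc n)" using rge[of "M+n"] rge[of "Suc (M+n)"] by auto
    then show "\<exists>i>m. (r i, w i, r (Suc i)) \<in> acc A" using n by (intro exI[of _ "M+n"]) auto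
  qed
  ultimately show ?thesis unfolding dag_has_accepting_run_def by blast
qed

end

context L begin

lemma dir2:
  assumes "dag_has_accepting_run A w"
  shows "even cs"
proof -
  obtain r where r0: "r 0 = init A" and rV: "\<And>i. r i \<in> V i" and rt: "\<And>i. (r i, w i, r (Suc i)) \<in> trans A"
    and racc: "\<exists>\<^sub>\<infinity>i. (r i, w i, r (Suc i)) \<in> acc A"
    using assms unfolding dag_has_accepting_run_def by blast
  obtain i1 where "(r i1, w i1, r (Suc i1)) \<in> acc A" using racc by (auto simp: INFM_nat)
  then have i1: "r i1 \<in> Qd" using acc_sub by blast
  have rQ: "r i \<in> Qd" if "i \<ge> i1" for i
    using that
  proof (induction i rule: dec_induct)
    case base then show ?case using i1 .
  next
    case (step n) then show ?case using closed rt by blast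
  qed
  have rD: "r i \<in> D i" if "i \<ge> i1" for i using rQ[OF that] rV by (simp add: D_iff)
  have rn: "r (Suc i) = nxt i (r i)" if "i \<ge> i1" for i using nxt_uniq[OF rQ[OF that] rt] .
  define g where "g i = ix i (r i)" for i
  have gmono: "g (Suc i) \<le> g i" if "i \<ge> i1" for i
    using ix_mono[OF rD[OF that]] rn[OF that] unfolding g_def by simp
  define k where "k = (LEAST v. \<exists>i\<ge>i1. g i = v)"
  obtain i0 where i0: "i0 \<ge> i1" "g i0 = k"
    using LeastI[of "\<lambda>v. \<exists>i\<ge>i1. g i = v" "g i1"] unfolding k_def by blast
  have kmin: "k \<le> g i" if "i \<ge> i1" for i using that unfolding k_def by (auto intro: Least_le)
  have gk: "g i = k" if "i \<ge> i0" for i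
  proof -
    have "g i \<le> g i0" using that
    proof (induction i rule: dec_induct)
      case base then show ?case by simp
    next
      case (step n) then show ?case using gmono[of n] i0(1) by simp
    qed
    then show ?thesis using kmin[of i] that i0 by simp
  qed
  have kle: "k \<le> card Qd" using ix_le[OF rD[OF i0(1)]] i0(2) unfolding g_def by simp
  have noDS: "\<forall>v\<in>DS i. ix i v > k" if "i \<ge> i0" for i
  proof
    fix v assume v: "v \<in> DS i"
    then obtain q' where q': "(v, w i, q') \<in> trans A" "q' \<in> D (Suc i)" "ix (Suc i) q' < ix i v" and vD: "v \<in> D i"
      unfolding dec_set_def by blast
    have q'n: "q' = nxt i v" using nxt_uniq q'(1) vD by (simp add: D_iff)
    have ii1: "i \<ge> i1" using that i0(1) by simp
    have gi: "ix i (r i) = k" "ix (Suc i) (nxt i (r i)) = k"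
      using gk[of i] gk[of "Suc i"] that rn[OF ii1] unfolding g_def by auto
    show "ix i v > k"
    proof (rule ccontr)
      assume "\<not> ix i v > k"
      then consider "ix i v = k" | "ix i v < k" by linarith
      then show False
      proof cases
        case 1
        then have "v = r i" using ix_inj[OF vD rD[OF ii1]] gi by simp
        then show False using q'(3) q'n gi 1 by simp
      next
        case 2
        then have "lt i v (r i)" using ix_lt[OF vD rD[OF ii1]] gi by simp
        then have "ix i v \<le> ix (Suc i) (nxt i v)" using stable[OF rD[OF ii1] _ vD] gi by simp
        then show False using q'(3) q'n by simp
      qed
    qed
  qed
  have "\<exists>\<^sub>\<infinity>i. col i \<le> 2 * k"
    unfolding INFM_nat
  proof
    fix m
    obtain i where i: "i > max m i0" "(r i, w i, r (Suc i)) \<in> acc A"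
      using racc unfolding INFM_nat by blast
    have ii: "i \<ge> i0" "i \<ge> i1" using i(1) i0(1) by auto
    have "r i \<in> FS i" unfolding acc_set_def
      using rD[OF ii(2)] rD[of "Suc i"] ii(2) i(2) rt[of i] by auto
    moreover have "ix i (r i) = k" using gk[OF ii(1)] unfolding g_def .
    ultimately have "col i \<le> 2 * k" by (rule C3)
    then show "\<exists>i>m. col i \<le> 2 * k" using i(1) by (intro exI[of _ i]) auto
  qed
  then have csk: "cs \<le> 2 * k" by (rule cs_le)
  show "even cs"
  proof (rule ccontr)
    assume od: "\<not> even cs"
    obtain i where i: "i > i0" "col i = cs" using cs_inf by (auto simp: INFM_nat)
    have "2 * k + 1 \<le> col i" using C2[OF noDS[of i] _ kle] i od by simp
    then show False using i csk by simp
  qed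
qed

lemma lang: "dag_has_accepting_run A w \<longleftrightarrow> w \<in> language A"
proof
  assume "dag_has_accepting_run A w"
  then show "w \<in> language A"
    unfolding dag_has_accepting_run_def language_def accepting_run_def is_run_def using word by blast
next
  assume "w \<in> language A"
  then obtain r where r: "r 0 = init A" "\<forall>i. (r i, w i, r (Suc i)) \<in> trans A"
    "\<exists>\<^sub>\<infinity>i. (r i, w i, r (Suc i)) \<in> acc A"
    unfolding language_def accepting_run_def is_run_def by blast
  have "r i \<in> V i" for i
    by (induction i) (use r in auto)
  then show "dag_has_accepting_run A w" unfolding dag_has_accepting_run_def using r by blast
qed

end

theorem theorem1:
  fixes A :: "('q, 'a) nba" and Qd :: "'q set" and Ord :: "'q \<Rightarrow> enat" and w :: "nat \<Rightarrow> 'a"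
  assumes "is_ldba A Qd" and "is_ordering A Qd Ord" and "is_word A w"
  shows "(even (color_summary A Qd w Ord) \<longleftrightarrow> dag_has_accepting_run A w)
       \<and> (even (color_summary A Qd w Ord) \<longleftrightarrow> w \<in> language A)"
proof -
  interpret L A Qd Ord w using assms by unfold_locales
  show ?thesis using dir1 dir2 lang by blast
qed


end
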